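(* Let $\mathcal{H}$ be a Hilbert space, $H_2\ge 0$ a selfadjoint operator on $\mathcal{H}$, and $H_1\ge0$ a selfadjoint operator on a closed subspace $\mathcal{H}_1\subset\mathcal{H}$ (possibly $\mathcal{H}_1=\mathcal{H}$). Let $\lambda_i:=\min\sigma(H_i)$, $i=1,2$, and assume $\lambda_1\ge\lambda_2$. Then $$0\le\lambda_1-\lambda_2\le(\lambda_1+1)^2\,\|(H_1+1)^{-1}-(H_2+1)^{-1}\|,$$ and, if $H_1$ is bounded, furthermore $(\lambda_1+1)^2\|(H_1+1)^{-1}-(H_2+1)^{-1}\|\le\|H_1+1\|^2\,\|(H_1+1)^{-1}-(H_2+1)^{-1}\|$.
   Context: When $\mathcal{H}_1\ne\mathcal{H}$, $(H_1+1)^{-1}$ is to be read as the operator $(H_1+1)^{-1}\oplus 0$ on $\mathcal{H}=\mathcal{H}_1\oplus\mathcal{H}_1^\perp$. *)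

theory Defs
  imports "HOL-Analysis.Analysis"
begin

text \<open>A (possibly unbounded) linear operator on a closed subspace S of a real Hilbert
space is given by a domain D and a function A (only its values on D matter).\<close>

definition lin_op_on :: "'a::real_inner set \<Rightarrow> 'a set \<Rightarrow> ('a \<Rightarrow> 'a) \<Rightarrow> bool" where
  "lin_op_on S D A \<longleftrightarrow> subspace D \<and> D \<subseteq> S \<and> (\<forall>x\<in>D. A x \<in> S) \<and>
     (\<forall>x\<in>D. \<forall>y\<in>D. A (x + y) = A x + A y) \<and> (\<forall>c. \<forall>x\<in>D. A (c *\<^sub>R x) = c *\<^sub>R A x)"

text \<open>Selfadjoint: densely defined in S, symmetric, and the adjoint domain is contained in D
(so A = A^*).\<close>

definition selfadjoint_on :: "'a::real_inner set \<Rightarrow> 'a set \<Rightarrow> ('a \<Rightarrow> 'a) \<Rightarrow> bool" where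
  "selfadjoint_on S D A \<longleftrightarrow> lin_op_on S D A \<and> S \<subseteq> closure D \<and>
     (\<forall>x\<in>D. \<forall>y\<in>D. A x \<bullet> y = x \<bullet> A y) \<and>
     (\<forall>y\<in>S. (\<exists>z\<in>S. \<forall>x\<in>D. A x \<bullet> y = x \<bullet> z) \<longrightarrow> y \<in> D)"

definition nonneg_on :: "'a::real_inner set \<Rightarrow> ('a \<Rightarrow> 'a) \<Rightarrow> bool" where
  "nonneg_on D A \<longleftrightarrow> (\<forall>x\<in>D. 0 \<le> A x \<bullet> x)"

definition resolvent_set_on :: "'a::real_inner set \<Rightarrow> 'a set \<Rightarrow> ('a \<Rightarrow> 'a) \<Rightarrow> real set" where
  "resolvent_set_on S D A = {\<mu>. bij_betw (\<lambda>x. A x - \<mu> *\<^sub>R x) D S \<and>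
     (\<exists>C. \<forall>x\<in>D. norm x \<le> C * norm (A x - \<mu> *\<^sub>R x))}"

definition spectrum_on :: "'a::real_inner set \<Rightarrow> 'a set \<Rightarrow> ('a \<Rightarrow> 'a) \<Rightarrow> real set" where
  "spectrum_on S D A = - resolvent_set_on S D A"

definition proj_on :: "'a::real_inner set \<Rightarrow> 'a \<Rightarrow> 'a" where
  "proj_on S x = (THE p. p \<in> S \<and> (\<forall>s\<in>S. (x - p) \<bullet> s = 0))"

text \<open>The operator (A + 1)^{-1} on S, extended by 0 on the orthogonal complement of S,
i.e. (A+1)^{-1} composed with the orthogonal projection onto S.\<close>

definition resolvent1_ext :: "'a::real_inner set \<Rightarrow> 'a set \<Rightarrow> ('a \<Rightarrow> 'a) \<Rightarrow> 'a \<Rightarrow> 'a" where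
  "resolvent1_ext S D A x = (THE y. y \<in> D \<and> A y + y = proj_on S x)"

definition bounded_op_on :: "'a::real_normed_vector set \<Rightarrow> ('a \<Rightarrow> 'a) \<Rightarrow> bool" where
  "bounded_op_on D A \<longleftrightarrow> (\<exists>C. \<forall>x\<in>D. norm (A x) \<le> C * norm x)"

definition op_norm_on :: "'a::real_normed_vector set \<Rightarrow> ('a \<Rightarrow> 'a) \<Rightarrow> real" where
  "op_norm_on D T = Sup ((\<lambda>x. norm (T x)) ` {x\<in>D. norm x = 1})"

end

theory Submission
  imports Defs
begin


lemma parallelogram_aux:
  fixes x a b :: "'a::real_inner"
  shows "norm (a - b)^2 = 2 * norm (x - a)^2 + 2 * norm (x - b)^2 - 4 * norm (x - (1/2) *\<^sub>R (a + b))^2"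
proof -
  have "x - (1/2) *\<^sub>R (a + b) = (1/2) *\<^sub>R ((x - a) + (x - b))" by (simp add: algebra_simps flip: scaleR_add_left)
  then have "4 * norm (x - (1/2) *\<^sub>R (a + b))^2 = norm ((x - a) + (x - b))^2"
    by (simp add: power2_eq_square)
  moreover have "a - b = (x - b) - (x - a)" by simp
  ultimately show ?thesis
    by (simp only: power2_norm_eq_inner inner_add_left inner_add_right inner_diff_left inner_diff_right)
       (simp add: inner_commute[of "x-a" "x-b"])
qed

lemma proj_exists:
  fixes M :: "'a::{real_inner,complete_space} set"
  assumes sM: "subspace M" and cM: "closed M"
  shows "\<exists>p\<in>M. \<forall>s\<in>M. (x - p) \<bullet> s = 0"
proof -
  define d where "d = infdist x M"
  define e :: "nat \<Rightarrow> real" where "e n = inverse (real (Suc n))" for n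
  have M0: "0 \<in> M" using sM subspace_0 by auto
  have d0: "0 \<le> d" unfolding d_def by (rule infdist_nonneg)
  have e0: "0 < e n" "e n \<le> 1" for n unfolding e_def by (auto simp: field_simps)
  have lower: "d \<le> norm (x - q)" if "q \<in> M" for q
    using infdist_le[OF that, of x] by (simp add: d_def dist_norm)
  have "\<exists>p\<in>M. dist x p < d + e n" for n
  proof -
    have "(INF a\<in>M. dist x a) < d + e n" using e0(1)[of n] M0
      by (simp add: d_def infdist_notempty[of M] del: infdist_notempty) (metis empty_iff infdist_notempty less_add_same_cancel1)
    then show ?thesis
      by (subst (asm) cINF_less_iff) (use M0 in \<open>auto intro: bdd_belowI[of _ 0]\<close>)
  qed
  then obtain p where pM: "\<And>n. p n \<in> M" and pd: "\<And>n. norm (x - p n) < d + e n"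
    by (metis dist_norm)
  have psq: "norm (x - p n)^2 \<le> d^2 + (2*d+1) * e n" for n
  proof -
    have "norm (x - p n)^2 \<le> (d + e n)^2"
      using pd[of n] by (intro power_mono) auto
    also have "\<dots> = d^2 + 2*d*e n + e n * e n" by (simp add: power2_eq_square algebra_simps)
    also have "\<dots> \<le> d^2 + 2*d*e n + e n" using e0[of n] by (simp add: mult_le_cancel_left1)
    finally show ?thesis by (simp add: algebra_simps)
  qed
  have pbound: "norm (p m - p n)^2 \<le> 2*(2*d+1)*(e m + e n)" for m n
  proof -
    have mid: "(1/2) *\<^sub>R (p m + p n) \<in> M" using sM pM by (simp add: subspace_add subspace_scale)
    have "d^2 \<le> norm (x - (1/2) *\<^sub>R (p m + p n))^2" using lower[OF mid] d0 by (intro power_mono) auto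
    then show ?thesis using parallelogram_aux[of "p m" "p n" x] psq[of m] psq[of n]
      by (simp add: algebra_simps)
  qed
  have "Cauchy p"
  proof (rule CauchyI)
    fix \<epsilon> :: real assume ep: "0 < \<epsilon>"
    obtain N :: nat where N: "4*(2*d+1) / \<epsilon>^2 < real N"
      using reals_Archimedean2 by blast
    have "norm (p m - p n) < \<epsilon>" if "m \<ge> N" "n \<ge> N" for m n
    proof -
      have eN: "e k \<le> inverse (real (Suc N))" if "k \<ge> N" for k
        unfolding e_def using that by (auto simp: field_simps)
      have pos: "0 < 4*(2*d+1)" using d0 by simp
      have "norm (p m - p n)^2 \<le> 2*(2*d+1)*(e m + e n)" by (rule pbound)
      also have "\<dots> \<le> 2*(2*d+1)*(2 * inverse (real (Suc N)))"
        using eN[OF that(1)] eN[OF that(2)] d0 by (intro mult_left_mono) auto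
      also have "\<dots> = 4*(2*d+1) / real (Suc N)" by (simp add: field_simps)
      also have "\<dots> < \<epsilon>^2"
      proof -
        have "4*(2*d+1) / \<epsilon>^2 < real (Suc N)" using N by simp
        then show ?thesis using ep pos by (simp add: field_simps)
      qed
      finally show ?thesis using ep by (meson power_less_imp_less_base less_le)
    qed
    then show "\<exists>N. \<forall>m\<ge>N. \<forall>n\<ge>N. norm (p m - p n) < \<epsilon>" by blast
  qed
  then obtain q where pq: "p \<longlonglongrightarrow> q" using Cauchy_convergent_iff convergent_def by blast
  have qM: "q \<in> M" using closed_sequentially[OF cM pM pq] .
  have "norm (x - q) \<le> d"
  proof (rule LIMSEQ_le)
    show "(\<lambda>n. norm (x - p n)) \<longlonglongrightarrow> norm (x - q)"
      by (intro tendsto_intros pq)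
    show "(\<lambda>n. d + e n) \<longlonglongrightarrow> d" unfolding e_def by (rule LIMSEQ_inverse_real_of_nat_add)
    show "\<exists>N. \<forall>n\<ge>N. norm (x - p n) \<le> d + e n" using pd less_imp_le by blast
  qed
  then have qmin: "norm (x - q)^2 \<le> norm (x - s)^2" if "s \<in> M" for s
    using lower[OF that] by (intro power_mono) auto
  have "(x - q) \<bullet> s = 0" if sM': "s \<in> M" for s
  proof (cases "s = 0")
    case True then show ?thesis by simp
  next
    case False
    define c where "c = (x - q) \<bullet> s"
    define t where "t = c / (s \<bullet> s)"
    have ss: "0 < s \<bullet> s" using False by simp
    have "q + t *\<^sub>R s \<in> M" using sM qM sM' by (simp add: subspace_add subspace_scale)
    from qmin[OF this] have "(x - q) \<bullet> (x - q) \<le> (x - q - t *\<^sub>R s) \<bullet> (x - q - t *\<^sub>R s)"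
      by (simp add: power2_norm_eq_inner algebra_simps)
    then have "0 \<le> t * t * (s \<bullet> s) - 2 * t * c"
      by (simp add: c_def inner_diff_left inner_diff_right inner_commute algebra_simps)
    then have "0 \<le> - (c * c) / (s \<bullet> s)"
      using ss by (simp add: t_def field_simps power2_eq_square)
    then have "c * c \<le> 0" using ss by (simp add: divide_le_0_iff)
    then show ?thesis unfolding c_def by (auto simp add: mult_le_0_iff)
  qed
  then show ?thesis using qM by blast
qed



lemma proj_unique_ex:
  fixes S :: "'a::{real_inner,complete_space} set"
  assumes "subspace S" "closed S"
  shows "\<exists>!p. p \<in> S \<and> (\<forall>s\<in>S. (x - p) \<bullet> s = 0)"
proof -
  obtain p where p: "p \<in> S" "\<forall>s\<in>S. (x - p) \<bullet> s = 0" using proj_exists[OF assms] by blast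
  have "q = p" if q: "q \<in> S" "\<forall>s\<in>S. (x - q) \<bullet> s = 0" for q
  proof -
    have "p - q \<in> S" using assms(1) p q by (simp add: subspace_diff)
    then have "(x - q) \<bullet> (p - q) - (x - p) \<bullet> (p - q) = 0" using p q by simp
    then have "(p - q) \<bullet> (p - q) = 0" by (simp add: algebra_simps inner_diff_left)
    then show ?thesis by simp
  qed
  then show ?thesis using p by blast
qed

lemma proj_on_props:
  fixes S :: "'a::{real_inner,complete_space} set"
  assumes "subspace S" "closed S"
  shows "proj_on S x \<in> S" "\<And>s. s \<in> S \<Longrightarrow> (x - proj_on S x) \<bullet> s = 0"
  using theI'[OF proj_unique_ex[OF assms, of x]] unfolding proj_on_def by auto

lemma proj_on_eq:
  fixes S :: "'a::{real_inner,complete_space} set"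
  assumes "subspace S" "closed S" "p \<in> S" "\<And>s. s \<in> S \<Longrightarrow> (x - p) \<bullet> s = 0"
  shows "proj_on S x = p"
  unfolding proj_on_def by (rule the1_equality[OF proj_unique_ex[OF assms(1,2)]]) (use assms(3,4) in auto)

lemma proj_on_UNIV: "proj_on (UNIV::'a::{real_inner,complete_space} set) x = x"
  by (rule proj_on_eq) (auto intro: subspace_UNIV)

lemma proj_on_add:
  fixes S :: "'a::{real_inner,complete_space} set"
  assumes "subspace S" "closed S"
  shows "proj_on S (x + y) = proj_on S x + proj_on S y"
proof (intro proj_on_eq assms)
  show "proj_on S x + proj_on S y \<in> S" using proj_on_props[OF assms] subspace_add[OF assms(1)] by auto
  fix s assume s: "s \<in> S"
  have "(x - proj_on S x) \<bullet> s = 0" "(y - proj_on S y) \<bullet> s = 0" using proj_on_props[OF assms] s by auto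
  moreover have "(x + y - (proj_on S x + proj_on S y)) = (x - proj_on S x) + (y - proj_on S y)" by simp
  ultimately show "(x + y - (proj_on S x + proj_on S y)) \<bullet> s = 0" by (simp only: inner_add_left)
qed

lemma proj_on_scale:
  fixes S :: "'a::{real_inner,complete_space} set"
  assumes "subspace S" "closed S"
  shows "proj_on S (c *\<^sub>R x) = c *\<^sub>R proj_on S x"
proof (intro proj_on_eq assms)
  show "c *\<^sub>R proj_on S x \<in> S" using proj_on_props[OF assms] subspace_scale[OF assms(1)] by auto
  fix s assume "s \<in> S"
  then have "(x - proj_on S x) \<bullet> s = 0" using proj_on_props[OF assms] by auto
  then show "(c *\<^sub>R x - c *\<^sub>R proj_on S x) \<bullet> s = 0"
    by (metis inner_scaleR_left mult_zero_right scaleR_right_diff_distrib)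
qed

lemma proj_on_norm:
  fixes S :: "'a::{real_inner,complete_space} set"
  assumes "subspace S" "closed S"
  shows "norm (proj_on S x) \<le> norm x"
proof -
  let ?p = "proj_on S x"
  have "(x - ?p) \<bullet> ?p = 0" using proj_on_props[OF assms] by auto
  then have "?p \<bullet> ?p = x \<bullet> ?p" by (simp add: inner_diff_left)
  also have "\<dots> \<le> norm x * norm ?p" by (rule norm_cauchy_schwarz)
  finally have "norm ?p * norm ?p \<le> norm x * norm ?p" by (simp add: dot_square_norm power2_eq_square)
  then show ?thesis by (cases "norm ?p = 0") (auto simp: mult_le_cancel_right)
qed

lemma lin_facts:
  assumes "lin_op_on S D A"
  shows "subspace D" "D \<subseteq> S" "\<And>x. x \<in> D \<Longrightarrow> A x \<in> S"
    "\<And>x y. x \<in> D \<Longrightarrow> y \<in> D \<Longrightarrow> A (x + y) = A x + A y"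
    "\<And>c x. x \<in> D \<Longrightarrow> A (c *\<^sub>R x) = c *\<^sub>R A x"
    "\<And>x y. x \<in> D \<Longrightarrow> y \<in> D \<Longrightarrow> A (x - y) = A x - A y"
    "A 0 = 0"
proof -
  show D: "subspace D" "D \<subseteq> S" "\<And>x. x \<in> D \<Longrightarrow> A x \<in> S"
    "\<And>x y. x \<in> D \<Longrightarrow> y \<in> D \<Longrightarrow> A (x + y) = A x + A y"
    "\<And>c x. x \<in> D \<Longrightarrow> A (c *\<^sub>R x) = c *\<^sub>R A x"
    using assms unfolding lin_op_on_def by auto
  show "A (x - y) = A x - A y" if "x \<in> D" "y \<in> D" for x y
  proof -
    have m: "(-1) *\<^sub>R y \<in> D" using D(1) that by (simp add: subspace_neg)
    have "A (x + (-1) *\<^sub>R y) = A x + A ((-1) *\<^sub>R y)" using D(4)[OF that(1) m] .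
    also have "\<dots> = A x + (-1) *\<^sub>R A y" using D(5)[OF that(2), of "-1"] by simp
    finally show ?thesis by simp
  qed
  have "0 \<in> D" using D(1) subspace_0 by blast
  from D(5)[OF this, of 0] show "A 0 = 0" by simp
qed

lemma cs_aux:
  fixes B :: "'a::real_inner \<Rightarrow> 'a"
  assumes sD: "subspace D"
    and add: "\<And>x y. x \<in> D \<Longrightarrow> y \<in> D \<Longrightarrow> B (x - y) = B x - B y"
    and sc: "\<And>c x. x \<in> D \<Longrightarrow> B (c *\<^sub>R x) = c *\<^sub>R B x"
    and sym: "\<And>x y. x \<in> D \<Longrightarrow> y \<in> D \<Longrightarrow> B x \<bullet> y = x \<bullet> B y"
    and nn: "\<And>x. x \<in> D \<Longrightarrow> 0 \<le> B x \<bullet> x"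
    and yD: "y \<in> D" and wD: "w \<in> D" and By: "B y = z" and Bw: "B w = y"
    and wK: "norm w \<le> K * norm y"
  shows "y \<bullet> y \<le> K * (z \<bullet> y)"
proof -
  have key: "0 \<le> z \<bullet> y - 2 * t * (y \<bullet> y) + t * t * (y \<bullet> w)" for t
  proof -
    have "y - t *\<^sub>R w \<in> D" using sD yD wD by (simp add: subspace_diff subspace_scale)
    from nn[OF this] have "0 \<le> (z - t *\<^sub>R y) \<bullet> (y - t *\<^sub>R w)"
      using add[OF yD, of "t *\<^sub>R w"] sD wD sc[OF wD] By Bw by (simp add: subspace_scale)
    moreover have "z \<bullet> w = y \<bullet> y" using sym[OF yD wD] By Bw by simp
    ultimately show ?thesis
      by (simp add: inner_diff_left inner_diff_right inner_commute algebra_simps)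
  qed
  have a0: "0 \<le> y \<bullet> w" using nn[OF wD] Bw by (simp add: inner_commute)
  have aK: "y \<bullet> w \<le> K * (y \<bullet> y)"
  proof -
    have "y \<bullet> w \<le> norm y * norm w" by (rule norm_cauchy_schwarz)
    also have "\<dots> \<le> norm y * (K * norm y)" using wK by (simp add: mult_left_mono)
    also have "\<dots> = K * (y \<bullet> y)" by (simp add: dot_square_norm power2_eq_square)
    finally show ?thesis .
  qed
  have zy0: "0 \<le> z \<bullet> y" using key[of 0] by simp
  show ?thesis
  proof (cases "y \<bullet> w = 0")
    case True
    have "0 \<le> z \<bullet> y - 2 * ((z \<bullet> y + 1) / (y \<bullet> y)) * (y \<bullet> y)" if "y \<noteq> 0"
      using key[of "(z \<bullet> y + 1) / (y \<bullet> y)"] True by simp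
    then have "y = 0" using zy0 by (cases "y = 0") auto
    then show ?thesis by simp
  next
    case False
    then have a: "0 < y \<bullet> w" using a0 by simp
    define a where "a = y \<bullet> w"
    define n where "n = y \<bullet> y"
    have "0 \<le> z \<bullet> y - 2 * (n / a) * n + (n / a) * (n / a) * a"
      using key[of "n / a"] unfolding a_def n_def .
    then have "0 \<le> z \<bullet> y - n * n / a" using a by (simp add: a_def field_simps)
    then have "n * n \<le> a * (z \<bullet> y)" using a by (simp add: a_def field_simps)
    also have "\<dots> \<le> K * n * (z \<bullet> y)" using aK zy0 by (simp add: a_def n_def mult_right_mono)
    finally have "n * n \<le> (K * (z \<bullet> y)) * n" by (simp add: algebra_simps)
    moreover have "0 \<le> n" by (simp add: n_def)
    ultimately show ?thesis unfolding n_def[symmetric]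
      by (cases "n = 0") (auto simp: mult_le_cancel_right n_def)
  qed
qed



lemma coercive_resolvent:
  fixes S :: "'a::{real_inner,complete_space} set"
  assumes sS: "subspace S" and cS: "closed S" and sa: "selfadjoint_on S D A"
    and co: "\<And>y. y \<in> D \<Longrightarrow> c * (y \<bullet> y) \<le> A y \<bullet> y" and mc: "\<mu> < c"
  shows "\<mu> \<in> resolvent_set_on S D A"
proof -
  have lin: "lin_op_on S D A" and dense: "S \<subseteq> closure D"
    and sym: "\<And>x y. x \<in> D \<Longrightarrow> y \<in> D \<Longrightarrow> A x \<bullet> y = x \<bullet> A y"
    and sac: "\<And>y. y \<in> S \<Longrightarrow> (\<exists>z\<in>S. \<forall>x\<in>D. A x \<bullet> y = x \<bullet> z) \<Longrightarrow> y \<in> D"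
    using sa unfolding selfadjoint_on_def by auto
  note L = lin_facts[OF lin]
  define B where "B x = A x - \<mu> *\<^sub>R x" for x
  define \<delta> where "\<delta> = c - \<mu>"
  have \<delta>: "0 < \<delta>" using mc by (simp add: \<delta>_def)
  have DS: "x \<in> D \<Longrightarrow> x \<in> S" for x using L(2) by auto
  have Bsub: "B (x - y) = B x - B y" if "x \<in> D" "y \<in> D" for x y
    using L(6)[OF that] by (simp add: B_def algebra_simps)
  have Badd: "B (x + y) = B x + B y" if "x \<in> D" "y \<in> D" for x y
    using L(4)[OF that] by (simp add: B_def algebra_simps)
  have Bsc: "B (a *\<^sub>R x) = a *\<^sub>R B x" if "x \<in> D" for a x
    using L(5)[OF that] by (simp add: B_def algebra_simps)
  have B0: "B 0 = 0" using L(7) by (simp add: B_def)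
  have BS: "B x \<in> S" if "x \<in> D" for x
    using L(3)[OF that] DS[OF that] sS by (simp add: B_def subspace_diff subspace_scale)
  have coB: "\<delta> * (y \<bullet> y) \<le> B y \<bullet> y" if "y \<in> D" for y
    using co[OF that] by (simp add: B_def \<delta>_def inner_diff_left algebra_simps)
  have bnd: "\<delta> * norm y \<le> norm (B y)" if "y \<in> D" for y
  proof (cases "y = 0")
    case True then show ?thesis by simp
  next
    case False
    have "\<delta> * norm y * norm y \<le> B y \<bullet> y" using coB[OF that]
      by (simp add: dot_square_norm power2_eq_square mult.assoc)
    also have "\<dots> \<le> norm (B y) * norm y" by (rule norm_cauchy_schwarz)
    finally show ?thesis using False by (simp add: mult_le_cancel_right)
  qed
  have inj: "inj_on B D"
  proof (rule inj_onI)
    fix x y assume xy: "x \<in> D" "y \<in> D" "B x = B y"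
    have "x - y \<in> D" using L(1) xy by (simp add: subspace_diff)
    from bnd[OF this] have "\<delta> * norm (x - y) \<le> 0" using Bsub[OF xy(1,2)] xy(3) by simp
    then show "x = y" using \<delta> by (simp add: mult_le_0_iff)
  qed
  define M where "M = B ` D"
  have MS: "M \<subseteq> S" using BS by (auto simp: M_def)
  have sM: "subspace M"
    unfolding subspace_def M_def
  proof (intro conjI ballI allI)
    show "0 \<in> B ` D" using B0 L(1) subspace_0 by (metis image_eqI)
    fix u v assume "u \<in> B ` D" "v \<in> B ` D"
    then obtain x y where "x \<in> D" "y \<in> D" "u = B x" "v = B y" by auto
    then show "u + v \<in> B ` D" using Badd L(1) by (metis image_eqI subspace_add)
  next
    fix a u assume "u \<in> B ` D"
    then obtain x where "x \<in> D" "u = B x" by auto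
    then show "a *\<^sub>R u \<in> B ` D" using Bsc L(1) by (metis image_eqI subspace_scale)
  qed
  have cM: "closed M"
    unfolding closed_sequential_limits
  proof (intro allI impI, elim conjE)
    fix xs f assume xM: "\<forall>n. xs n \<in> M" and lim: "xs \<longlonglongrightarrow> f"
    then have "\<forall>n. \<exists>y\<in>D. xs n = B y" by (auto simp: M_def)
    then obtain ys where yD: "\<And>n. ys n \<in> D" and xy: "\<And>n. xs n = B (ys n)" by metis
    have "Cauchy xs" using lim by (rule LIMSEQ_imp_Cauchy)
    have "Cauchy ys"
    proof (rule CauchyI)
      fix e :: real assume e: "0 < e"
      obtain N where N: "\<forall>m\<ge>N. \<forall>n\<ge>N. norm (xs m - xs n) < \<delta> * e"
        using CauchyD[OF \<open>Cauchy xs\<close>, of "\<delta> * e"] \<delta> e by auto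
      have "norm (ys m - ys n) < e" if "m \<ge> N" "n \<ge> N" for m n
      proof -
        have "ys m - ys n \<in> D" using L(1) yD by (simp add: subspace_diff)
        from bnd[OF this] have "\<delta> * norm (ys m - ys n) \<le> norm (xs m - xs n)"
          using Bsub[OF yD yD] xy by simp
        also have "\<dots> < \<delta> * e" using N that by auto
        finally show ?thesis using \<delta> by simp
      qed
      then show "\<exists>N. \<forall>m\<ge>N. \<forall>n\<ge>N. norm (ys m - ys n) < e" by blast
    qed
    then obtain y0 where ylim: "ys \<longlonglongrightarrow> y0" using Cauchy_convergent_iff convergent_def by blast
    have y0S: "y0 \<in> S" using closed_sequentially[OF cS _ ylim] DS yD by blast
    have fS: "f \<in> S" using closed_sequentially[OF cS _ lim] xM MS by blast
    have adj: "A x \<bullet> y0 = x \<bullet> (f + \<mu> *\<^sub>R y0)" if xD: "x \<in> D" for x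
    proof -
      have l1: "(\<lambda>n. A x \<bullet> ys n) \<longlonglongrightarrow> A x \<bullet> y0" by (intro tendsto_intros ylim)
      have eq: "A x \<bullet> ys n = x \<bullet> (xs n + \<mu> *\<^sub>R ys n)" for n
        using sym[OF xD yD[of n]] xy[of n] by (simp add: B_def)
      have l2: "(\<lambda>n. x \<bullet> (xs n + \<mu> *\<^sub>R ys n)) \<longlonglongrightarrow> x \<bullet> (f + \<mu> *\<^sub>R y0)"
        by (intro tendsto_intros lim ylim)
      show ?thesis using LIMSEQ_unique[OF l1 l2[folded eq]] .
    qed
    have "f + \<mu> *\<^sub>R y0 \<in> S" using sS fS y0S by (simp add: subspace_add subspace_scale)
    then have y0D: "y0 \<in> D" using sac[OF y0S] adj by blast
    define v where "v = B y0 - f"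
    have "v \<in> S" using BS[OF y0D] fS sS by (simp add: v_def subspace_diff)
    then have vD: "v \<in> closure D" using dense by auto
    have "D \<subseteq> {w. v \<bullet> w = 0}"
    proof
      fix x assume xD: "x \<in> D"
      have "x \<bullet> v = x \<bullet> A y0 - \<mu> * (x \<bullet> y0) - x \<bullet> f"
        by (simp add: v_def B_def inner_diff_right)
      also have "\<dots> = 0" using adj[OF xD] sym[OF xD y0D]
        by (simp add: inner_add_right)
      finally show "x \<in> {w. v \<bullet> w = 0}" by (simp add: inner_commute)
    qed
    then have "closure D \<subseteq> {w. v \<bullet> w = 0}"
      by (intro closure_minimal) (auto intro: closed_hyperplane)
    with vD have "v = 0" by auto
    then show "f \<in> M" using y0D by (auto simp: v_def M_def)
  qed
  have surj: "S \<subseteq> M"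
  proof
    fix f assume fS: "f \<in> S"
    obtain p where pM: "p \<in> M" and orth: "\<And>s. s \<in> M \<Longrightarrow> (f - p) \<bullet> s = 0"
      using proj_exists[OF sM cM, of f] by blast
    define r where "r = f - p"
    have rS: "r \<in> S" using fS pM MS sS by (auto simp: r_def subspace_diff)
    have "A x \<bullet> r = x \<bullet> (\<mu> *\<^sub>R r)" if "x \<in> D" for x
    proof -
      have "r \<bullet> B x = 0" using orth[of "B x"] that by (auto simp: r_def M_def)
      then show ?thesis by (simp add: B_def inner_diff_right inner_commute)
    qed
    moreover have "\<mu> *\<^sub>R r \<in> S" using rS sS by (simp add: subspace_scale)
    ultimately have rD: "r \<in> D" using sac[OF rS] by blast
    have "r \<bullet> B r = 0" using orth[of "B r"] rD by (auto simp: r_def M_def)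
    with coB[OF rD] \<delta> have "r \<bullet> r \<le> 0" by (simp add: inner_commute mult_le_0_iff)
    then have "r \<bullet> r = 0" using inner_ge_zero[of r] by linarith
    then have "r = 0" by simp
    then show "f \<in> M" using pM by (simp add: r_def)
  qed
  have bij: "bij_betw B D S" unfolding bij_betw_def using inj surj MS by (auto simp: M_def)
  have bd: "\<forall>x\<in>D. norm x \<le> (1/\<delta>) * norm (B x)"
    using bnd \<delta> by (auto simp: field_simps)
  have Beq: "(\<lambda>x. A x - \<mu> *\<^sub>R x) = B" by (rule ext) (simp add: B_def)
  show ?thesis unfolding resolvent_set_on_def Beq mem_Collect_eq
    using bij bd by (intro conjI exI[of _ "1/\<delta>"]) (auto simp: B_def)
qed

lemma resolvent_coercive:
  assumes sa: "selfadjoint_on S D A" and res: "\<mu> \<in> resolvent_set_on S D A"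
    and nn: "\<And>y. y \<in> D \<Longrightarrow> 0 \<le> (A y - \<mu> *\<^sub>R y) \<bullet> y"
  obtains C where "\<And>y. y \<in> D \<Longrightarrow> y \<bullet> y \<le> C * ((A y - \<mu> *\<^sub>R y) \<bullet> y)"
proof -
  have lin: "lin_op_on S D A" 
    and sym: "\<And>x y. x \<in> D \<Longrightarrow> y \<in> D \<Longrightarrow> A x \<bullet> y = x \<bullet> A y"
    using sa unfolding selfadjoint_on_def by auto
  note L = lin_facts[OF lin]
  define B where "B x = A x - \<mu> *\<^sub>R x" for x
  obtain C0 where bij: "bij_betw B D S" and C0: "\<And>x. x \<in> D \<Longrightarrow> norm x \<le> C0 * norm (B x)"
    using res unfolding resolvent_set_on_def B_def[abs_def] by auto
  have *: "y \<bullet> y \<le> C0 * (B y \<bullet> y)" if yD: "y \<in> D" for y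
  proof -
    have "y \<in> S" using L(2) yD by auto
    then obtain w where wD: "w \<in> D" and Bw: "B w = y" using bij unfolding bij_betw_def by (metis imageE)
    show ?thesis
    proof (rule cs_aux[where B=B and D=D and y=y and w=w and z="B y" and K=C0])
      show "B (x - y) = B x - B y" if "x \<in> D" "y \<in> D" for x y
        using L(6)[OF that] by (simp add: B_def algebra_simps)
      show "B (a *\<^sub>R x) = a *\<^sub>R B x" if "x \<in> D" for a x
        using L(5)[OF that] by (simp add: B_def algebra_simps)
      show "B x \<bullet> y = x \<bullet> B y" if "x \<in> D" "y \<in> D" for x y
        using sym[OF that] by (simp add: B_def inner_diff_left inner_diff_right inner_commute)
      show "0 \<le> B x \<bullet> x" if "x \<in> D" for x using nn[OF that] by (simp add: B_def)
      show "norm w \<le> C0 * norm y" using C0[OF wD] Bw by simp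
    qed (use L(1) yD wD Bw in auto)
  qed
  show ?thesis by (rule that[of C0]) (use * in \<open>simp add: B_def\<close>)
qed



lemma resolvent_ex1:
  fixes S :: "'a::{real_inner,complete_space} set"
  assumes sS: "subspace S" and cS: "closed S" and sa: "selfadjoint_on S D A" and nn: "nonneg_on D A"
  shows "\<exists>!y. y \<in> D \<and> A y + y = proj_on S x"
proof -
  have "-1 \<in> resolvent_set_on S D A"
    by (rule coercive_resolvent[OF sS cS sa, of 0]) (use nn in \<open>auto simp: nonneg_on_def\<close>)
  then have bij: "bij_betw (\<lambda>y. A y + y) D S" unfolding resolvent_set_on_def by simp
  have "proj_on S x \<in> S" by (rule proj_on_props(1)[OF sS cS])
  moreover have im: "(\<lambda>y. A y + y) ` D = S" and inj: "inj_on (\<lambda>y. A y + y) D"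
    using bij unfolding bij_betw_def by auto
  ultimately have "proj_on S x \<in> (\<lambda>y. A y + y) ` D" by simp
  then obtain y where "y \<in> D" "A y + y = proj_on S x" by auto
  moreover have "z = y" if "z \<in> D" "A z + z = proj_on S x" for z
    using inj_onD[OF inj _ that(1) \<open>y \<in> D\<close>] that(2) \<open>A y + y = proj_on S x\<close> by simp
  ultimately show ?thesis by blast
qed

lemma resolvent_props:
  fixes S :: "'a::{real_inner,complete_space} set"
  assumes sS: "subspace S" and cS: "closed S" and sa: "selfadjoint_on S D A" and nn: "nonneg_on D A"
  shows "resolvent1_ext S D A x \<in> D" "A (resolvent1_ext S D A x) + resolvent1_ext S D A x = proj_on S x"
  using theI'[OF resolvent_ex1[OF assms, of x]] unfolding resolvent1_ext_def by auto

lemma resolvent_eq: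
  fixes S :: "'a::{real_inner,complete_space} set"
  assumes sS: "subspace S" and cS: "closed S" and sa: "selfadjoint_on S D A" and nn: "nonneg_on D A"
    and "y \<in> D" "A y + y = proj_on S x"
  shows "resolvent1_ext S D A x = y"
  unfolding resolvent1_ext_def by (rule the1_equality[OF resolvent_ex1[OF sS cS sa nn]]) (use assms in auto)

lemma resolvent_norm:
  fixes S :: "'a::{real_inner,complete_space} set"
  assumes sS: "subspace S" and cS: "closed S" and sa: "selfadjoint_on S D A" and nn: "nonneg_on D A"
    and co: "\<And>y. y \<in> D \<Longrightarrow> c * (y \<bullet> y) \<le> A y \<bullet> y" and c0: "0 \<le> c"
  shows "norm (resolvent1_ext S D A x) * (c + 1) \<le> norm x"
proof -
  let ?y = "resolvent1_ext S D A x"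
  have yD: "?y \<in> D" and eq: "A ?y + ?y = proj_on S x" using resolvent_props[OF assms(1-4)] by auto
  have "(c + 1) * (?y \<bullet> ?y) \<le> (A ?y + ?y) \<bullet> ?y" using co[OF yD] by (simp add: inner_add_left algebra_simps)
  also have "\<dots> = proj_on S x \<bullet> ?y" using eq by simp
  also have "\<dots> \<le> norm (proj_on S x) * norm ?y" by (rule norm_cauchy_schwarz)
  also have "\<dots> \<le> norm x * norm ?y" using proj_on_norm[OF sS cS] by (simp add: mult_right_mono)
  finally have "(c + 1) * norm ?y * norm ?y \<le> norm x * norm ?y"
    by (simp add: dot_square_norm power2_eq_square mult.assoc)
  then show ?thesis by (cases "norm ?y = 0") (auto simp: mult_le_cancel_right mult.commute)
qed

lemma resolvent_bl:
  fixes S :: "'a::{real_inner,complete_space} set"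
  assumes sS: "subspace S" and cS: "closed S" and sa: "selfadjoint_on S D A" and nn: "nonneg_on D A"
  shows "bounded_linear (resolvent1_ext S D A)"
proof -
  have lin: "lin_op_on S D A" using sa unfolding selfadjoint_on_def by auto
  note L = lin_facts[OF lin]
  note P = resolvent_props[OF assms]
  show ?thesis
  proof (rule bounded_linear_intro[where K=1])
    fix x y
    show "resolvent1_ext S D A (x + y) = resolvent1_ext S D A x + resolvent1_ext S D A y"
    proof (rule resolvent_eq[OF assms])
      show "resolvent1_ext S D A x + resolvent1_ext S D A y \<in> D" using P L(1) by (simp add: subspace_add)
      show "A (resolvent1_ext S D A x + resolvent1_ext S D A y) + (resolvent1_ext S D A x + resolvent1_ext S D A y)
          = proj_on S (x + y)"
        using L(4)[OF P(1) P(1)] P(2)[of x] P(2)[of y] proj_on_add[OF sS cS]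
        by (simp add: algebra_simps)
    qed
  next
    fix r x
    show "resolvent1_ext S D A (r *\<^sub>R x) = r *\<^sub>R resolvent1_ext S D A x"
    proof (rule resolvent_eq[OF assms])
      show "r *\<^sub>R resolvent1_ext S D A x \<in> D" using P L(1) by (simp add: subspace_scale)
      show "A (r *\<^sub>R resolvent1_ext S D A x) + r *\<^sub>R resolvent1_ext S D A x = proj_on S (r *\<^sub>R x)"
        using L(5)[OF P(1)] P(2)[of x] proj_on_scale[OF sS cS]
        by (simp add: scaleR_right_distrib[symmetric])
    qed
  next
    fix x
    show "norm (resolvent1_ext S D A x) \<le> norm x * 1"
      using resolvent_norm[OF assms, of 0 x] nn by (simp add: nonneg_on_def)
  qed
qed

lemma spectrum_nonneg:
  fixes S :: "'a::{real_inner,complete_space} set"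
  assumes sS: "subspace S" and cS: "closed S" and sa: "selfadjoint_on S D A" and nn: "nonneg_on D A"
    and l: "l \<in> spectrum_on S D A"
  shows "0 \<le> l"
proof (rule ccontr)
  assume "\<not> 0 \<le> l"
  then have "l \<in> resolvent_set_on S D A"
    by (intro coercive_resolvent[OF sS cS sa, of 0]) (use nn in \<open>auto simp: nonneg_on_def\<close>)
  then show False using l by (simp add: spectrum_on_def)
qed

lemma spectrum_lower:
  fixes S :: "'a::{real_inner,complete_space} set"
  assumes sS: "subspace S" and cS: "closed S" and sa: "selfadjoint_on S D A" and nn: "nonneg_on D A"
    and l: "l \<in> spectrum_on S D A" and lmin: "\<forall>\<mu>\<in>spectrum_on S D A. l \<le> \<mu>"
    and yD: "y \<in> D"
  shows "l * (y \<bullet> y) \<le> A y \<bullet> y"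
proof (rule ccontr)
  assume "\<not> ?thesis"
  then have y0: "A y \<bullet> y < l * (y \<bullet> y)" by simp
  have lin: "lin_op_on S D A" using sa unfolding selfadjoint_on_def by auto
  note L = lin_facts[OF lin]
  have nn': "0 \<le> A x \<bullet> x" if "x \<in> D" for x using nn that by (simp add: nonneg_on_def)
  have sc: "A (a *\<^sub>R x) \<bullet> (a *\<^sub>R x) = a * a * (A x \<bullet> x)" if "x \<in> D" for a x
    using L(5)[OF that] by simp
  have unit: "(1 / norm x) *\<^sub>R x \<in> D \<and> ((1 / norm x) *\<^sub>R x) \<bullet> ((1 / norm x) *\<^sub>R x) = 1
      \<and> A ((1 / norm x) *\<^sub>R x) \<bullet> ((1 / norm x) *\<^sub>R x) = (A x \<bullet> x) / (x \<bullet> x)"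
    if "x \<in> D" "x \<noteq> 0" for x
  proof -
    have e: "A ((1 / norm x) *\<^sub>R x) = (1 / norm x) *\<^sub>R A x" using L(5)[OF that(1)] .
    show ?thesis using that L(1) unfolding e
      by (simp add: subspace_scale dot_square_norm power2_eq_square field_simps)
  qed
  have yne: "y \<noteq> 0" using y0 L(7) by auto
  define U where "U = {x \<in> D. x \<bullet> x = 1}"
  define Q where "Q = (\<lambda>x. A x \<bullet> x) ` U"
  define m where "m = Inf Q"
  define u where "u = (1 / norm y) *\<^sub>R y"
  have uU: "u \<in> U" and uval: "A u \<bullet> u = (A y \<bullet> y) / (y \<bullet> y)"
    using unit[OF yD yne] by (auto simp: U_def u_def)
  have Qne: "Q \<noteq> {}" using uU by (auto simp: Q_def)
  have Qbdd: "bdd_below Q" unfolding Q_def U_def by (rule bdd_belowI[of _ 0]) (auto intro: nn')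
  have "m \<le> A u \<bullet> u" unfolding m_def Q_def by (rule cInf_lower) (use uU Qbdd in \<open>auto simp: Q_def\<close>)
  moreover have "A u \<bullet> u < l" using uval y0 yne by (simp add: divide_less_eq)
  ultimately have ml: "m < l" by simp
  have mlow: "m * (x \<bullet> x) \<le> A x \<bullet> x" if xD: "x \<in> D" for x
  proof (cases "x = 0")
    case True then show ?thesis using L(7) by simp
  next
    case False
    have "m \<le> (A x \<bullet> x) / (x \<bullet> x)" unfolding m_def Q_def
      using unit[OF xD False] Qbdd by (intro cInf_lower) (auto simp: Q_def U_def intro!: image_eqI)
    then show ?thesis using False by (simp add: le_divide_eq)
  qed
  have "m \<notin> spectrum_on S D A" using lmin ml by auto
  then have mres: "m \<in> resolvent_set_on S D A" by (simp add: spectrum_on_def)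
  obtain C where C: "\<And>x. x \<in> D \<Longrightarrow> x \<bullet> x \<le> C * ((A x - m *\<^sub>R x) \<bullet> x)"
    using resolvent_coercive[OF sa mres] mlow by (fastforce simp: inner_diff_left)
  have Cu: "1 \<le> C * (A u \<bullet> u - m)" using C[of u] uU by (simp add: U_def inner_diff_left)
  have "0 \<le> A u \<bullet> u - m" using \<open>m \<le> A u \<bullet> u\<close> by simp
  then have Cpos: "0 < C" using Cu by (cases "C \<le> 0") (auto simp: mult_le_0_iff, smt (verit) mult_nonpos_nonneg)
  have "m + 1 / C \<le> m" unfolding m_def
  proof (rule cInf_greatest[OF Qne])
    fix q assume "q \<in> Q"
    then obtain x where xU: "x \<in> U" and q: "q = A x \<bullet> x" by (auto simp: Q_def)
    have "1 \<le> C * (A x \<bullet> x - m)" using C[of x] xU by (simp add: U_def inner_diff_left)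
    then have "1 / C \<le> A x \<bullet> x - m" using Cpos by (simp add: divide_le_eq mult.commute)
    then show "Inf Q + 1 / C \<le> q" using q by (simp add: m_def)
  qed
  then show False using Cpos by simp
qed



theorem lemma4p3:
  fixes S :: "'a::{real_inner, complete_space} set"
    and D1 D2 :: "'a set" and A1 A2 :: "'a \<Rightarrow> 'a" and l1 l2 :: real
  assumes "subspace S" and "closed S"
    and "selfadjoint_on S D1 A1" and "nonneg_on D1 A1"
    and "selfadjoint_on UNIV D2 A2" and "nonneg_on D2 A2"
    and "l1 \<in> spectrum_on S D1 A1" and "\<forall>\<mu>\<in>spectrum_on S D1 A1. l1 \<le> \<mu>"
    and "l2 \<in> spectrum_on UNIV D2 A2" and "\<forall>\<mu>\<in>spectrum_on UNIV D2 A2. l2 \<le> \<mu>"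
    and "l1 \<ge> l2"
  shows "0 \<le> l1 - l2 \<and>
         l1 - l2 \<le> (l1 + 1)^2 * onorm (\<lambda>x. resolvent1_ext S D1 A1 x - resolvent1_ext UNIV D2 A2 x) \<and>
         (bounded_op_on D1 A1 \<longrightarrow>
            (l1 + 1)^2 * onorm (\<lambda>x. resolvent1_ext S D1 A1 x - resolvent1_ext UNIV D2 A2 x)
            \<le> (op_norm_on D1 (\<lambda>x. A1 x + x))^2 *
               onorm (\<lambda>x. resolvent1_ext S D1 A1 x - resolvent1_ext UNIV D2 A2 x))"
proof -
  note a1 = assms(1-4)
  have sU: "subspace (UNIV::'a set)" by (rule subspace_UNIV)
  have cU: "closed (UNIV::'a set)" by simp
  note a2 = sU cU assms(5,6)
  define R1 where "R1 = resolvent1_ext S D1 A1"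
  define R2 where "R2 = resolvent1_ext UNIV D2 A2"
  define N where "N = onorm (\<lambda>x. R1 x - R2 x)"
  have bl: "bounded_linear (\<lambda>x. R1 x - R2 x)"
    unfolding R1_def R2_def by (intro bounded_linear_sub resolvent_bl a1 a2)
  have N0: "0 \<le> N" unfolding N_def by (rule onorm_pos_le[OF bl])
  have NF: "norm (R1 x - R2 x) \<le> N * norm x" for x unfolding N_def by (rule onorm[OF bl])
  have l2pos: "0 \<le> l2" by (rule spectrum_nonneg[OF a2 assms(9)])
  have l1pos: "0 \<le> l1" using l2pos assms(11) by simp
  have low1: "l1 * (y \<bullet> y) \<le> A1 y \<bullet> y" if "y \<in> D1" for y
    by (rule spectrum_lower[OF a1 assms(7,8) that])
  have R1b: "norm (R1 x) * (l1 + 1) \<le> norm x" for x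
    unfolding R1_def by (rule resolvent_norm[OF a1 low1 l1pos])
  define K where "K = 1 / (l1 + 1) + N"
  have Kpos: "0 < K" using l1pos N0 by (simp add: K_def add_pos_nonneg)
  have R2b: "norm (R2 x) \<le> K * norm x" for x
  proof -
    have "norm (R2 x) \<le> norm (R1 x) + norm (R1 x - R2 x)" by (metis norm_triangle_sub norm_minus_commute)
    also have "\<dots> \<le> norm x / (l1 + 1) + N * norm x"
      using R1b[of x] NF[of x] l1pos by (intro add_mono) (simp_all add: le_divide_eq)
    finally show ?thesis by (simp add: K_def algebra_simps)
  qed
  have lin2: "lin_op_on UNIV D2 A2" using assms(5) unfolding selfadjoint_on_def by (elim conjE)
  have sym2: "\<And>x y. x \<in> D2 \<Longrightarrow> y \<in> D2 \<Longrightarrow> A2 x \<bullet> y = x \<bullet> A2 y"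
    using assms(5) unfolding selfadjoint_on_def by (elim conjE) blast
  note L2 = lin_facts[OF lin2]
  have nn2: "0 \<le> A2 x \<bullet> x" if "x \<in> D2" for x using assms(6) that by (simp add: nonneg_on_def)
  have cs2: "y \<bullet> y \<le> K * ((A2 y + y) \<bullet> y)" if yD: "y \<in> D2" for y
  proof (rule cs_aux[where B="\<lambda>x. A2 x + x" and D=D2 and y=y and w="R2 y" and z="A2 y + y" and K=K])
    show "A2 (x - y) + (x - y) = A2 x + x - (A2 y + y)" if "x \<in> D2" "y \<in> D2" for x y
      using L2(6)[OF that] by simp
    show "A2 (c *\<^sub>R x) + c *\<^sub>R x = c *\<^sub>R (A2 x + x)" if "x \<in> D2" for c x
      using L2(5)[OF that] by (simp add: scaleR_right_distrib)
    show "(A2 x + x) \<bullet> y = x \<bullet> (A2 y + y)" if "x \<in> D2" "y \<in> D2" for x y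
      using sym2[OF that] by (simp add: inner_add_left inner_add_right inner_commute)
    show "0 \<le> (A2 x + x) \<bullet> x" if "x \<in> D2" for x using nn2[OF that] by (simp add: inner_add_left)
    show "R2 y \<in> D2" unfolding R2_def by (rule resolvent_props(1)[OF a2])
    show "A2 (R2 y) + R2 y = y" unfolding R2_def using resolvent_props(2)[OF a2, of y] by (simp add: proj_on_UNIV)
    show "norm (R2 y) \<le> K * norm y" by (rule R2b)
  qed (use L2(1) yD in auto)
  define c where "c = 1 / K - 1"
  have low2: "c * (y \<bullet> y) \<le> A2 y \<bullet> y" if "y \<in> D2" for y
  proof -
    have "(y \<bullet> y) / K \<le> A2 y \<bullet> y + y \<bullet> y" using cs2[OF that] Kpos
      by (simp add: divide_le_eq inner_add_left mult.commute)
    then show ?thesis by (simp add: c_def algebra_simps)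
  qed
  have "c \<le> l2"
  proof (rule ccontr)
    assume "\<not> c \<le> l2"
    then have "l2 \<in> resolvent_set_on UNIV D2 A2"
      by (intro coercive_resolvent[OF sU cU assms(5) low2]) auto
    then show False using assms(9) by (simp add: spectrum_on_def)
  qed
  then have Kl2: "1 \<le> K * (l2 + 1)" using Kpos by (simp add: c_def divide_le_eq algebra_simps)
  have main: "l1 - l2 \<le> (l1 + 1)^2 * N"
  proof -
    have "1 \<le> (1 / (l1 + 1) + N) * (l2 + 1)" using Kl2 by (simp add: K_def)
    then have "l1 + 1 \<le> (1 + N * (l1 + 1)) * (l2 + 1)" using l1pos
      by (simp add: field_simps)
    then have "l1 - l2 \<le> N * (l1 + 1) * (l2 + 1)" by (simp add: algebra_simps)
    also have "\<dots> \<le> N * (l1 + 1) * (l1 + 1)"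
      using N0 l1pos assms(11) by (intro mult_left_mono) auto
    finally show ?thesis by (simp add: power2_eq_square algebra_simps)
  qed
  have third: "(l1 + 1)^2 * N \<le> (op_norm_on D1 (\<lambda>x. A1 x + x))^2 * N" if bd: "bounded_op_on D1 A1"
  proof -
    have lin1: "lin_op_on S D1 A1" using assms(3) unfolding selfadjoint_on_def by (elim conjE)
    have dense1: "S \<subseteq> closure D1" using assms(3) unfolding selfadjoint_on_def by (elim conjE)
    note L1 = lin_facts[OF lin1]
    have "\<exists>y\<in>D1. y \<noteq> 0"
    proof (rule ccontr)
      assume "\<not> ?thesis"
      then have D10: "D1 = {0}" using L1(1) subspace_0 by blast
      then have "S \<subseteq> {0}" using dense1 by simp
      then have S0: "S = {0}" using assms(1) subspace_0 by blast
      have "l1 \<in> resolvent_set_on S D1 A1"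
        unfolding resolvent_set_on_def D10 S0 using L1(7)
        by (auto simp: bij_betw_def intro: exI[of _ 0])
      then show False using assms(7) by (simp add: spectrum_on_def)
    qed
    then obtain y where yD: "y \<in> D1" and yne: "y \<noteq> 0" by blast
    define u where "u = (1 / norm y) *\<^sub>R y"
    have uD: "u \<in> D1" using L1(1) yD by (simp add: u_def subspace_scale)
    have un: "norm u = 1" using yne by (simp add: u_def)
    obtain C where C: "\<And>x. x \<in> D1 \<Longrightarrow> norm (A1 x) \<le> C * norm x" using bd by (auto simp: bounded_op_on_def)
    let ?X = "(\<lambda>x. norm (A1 x + x)) ` {x \<in> D1. norm x = 1}"
    have bdd: "bdd_above ?X"
    proof (rule bdd_aboveI[of _ "C + 1"])
      fix t assume "t \<in> ?X"
      then obtain x where "x \<in> D1" "norm x = 1" "t = norm (A1 x + x)" by auto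
      then show "t \<le> C + 1" using C[of x] norm_triangle_ineq[of "A1 x" x] by simp
    qed
    have "l1 + 1 \<le> norm (A1 u + u)"
    proof -
      have "l1 + 1 = (l1 + 1) * (u \<bullet> u)" using un by (simp add: dot_square_norm)
      also have "\<dots> \<le> (A1 u + u) \<bullet> u" using low1[OF uD] by (simp add: inner_add_left algebra_simps)
      also have "\<dots> \<le> norm (A1 u + u) * norm u" by (rule norm_cauchy_schwarz)
      finally show ?thesis using un by simp
    qed
    moreover have uX: "u \<in> {x \<in> D1. norm x = 1}" using uD un by simp
    ultimately have "l1 + 1 \<le> op_norm_on D1 (\<lambda>x. A1 x + x)"
      unfolding op_norm_on_def using cSUP_upper2[OF bdd uX] by blast
    then have "(l1 + 1)^2 \<le> (op_norm_on D1 (\<lambda>x. A1 x + x))^2" using l1pos by (intro power_mono) auto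
    then show ?thesis using N0 by (rule mult_right_mono)
  qed
  show ?thesis using main third assms(11) unfolding N_def R1_def R2_def by auto
qed


end
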